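(* Let $L$ be a BZ--lattice whose $0$ is meet--irreducible (equivalently, whose $1$ is join--irreducible). Then $L$ is an antiortholattice, i.e. $\{a\in L: a\wedge a'=0\}=\{0,1\}$ and the Brouwer complement of $L$ is the trivial one ($0^\sim=1$ and $a^\sim=0$ for all $a\in L\setminus\{0\}$). In particular, every BZ--lattice whose lattice reduct is a chain is an antiortholattice.
   Context: A pseudo--Kleene algebra is a bounded lattice with a unary operation $'$ satisfying $a''=a$, $a\leq b\Rightarrow b'\leq a'$, and $a\wedge a'\leq b\vee b'$ for all $a,b$. A BZ--lattice is an algebra $(L,\vee,\wedge,',{}^\sim,0,1)$ where $(L,\vee,\wedge,',0,1)$ is a pseudo--Kleene algebra and ${}^\sim$ (the Brouwer complement) satisfies, for all $a,b$: $a\wedge a^\sim=0$, $a\leq a^{\sim\sim}$, $a^{\sim\prime}=a^{\sim\sim}$, and $a\leq b\Rightarrow b^\sim\leq a^\sim$. "$0$ meet--irreducible" means $a\wedge b=0$ implies $a=0$ or $b=0$. An antiortholattice is a pseudo--Kleene algebra with $\{a: a\wedge a'=0\}=\{0,1\}$, equipped with the trivial Brouwer complement. *)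

theory Defs
  imports Main
begin

text \<open>The lattice is a type of class bounded_lattice; the Kleene complement is
  a function kc and the Brouwer complement a function bc on that type.\<close>

definition pseudo_kleene :: "('a::bounded_lattice \<Rightarrow> 'a) \<Rightarrow> bool" where
  "pseudo_kleene kc \<longleftrightarrow>
     (\<forall>a. kc (kc a) = a) \<and>
     (\<forall>a b. a \<le> b \<longrightarrow> kc b \<le> kc a) \<and>
     (\<forall>a b. inf a (kc a) \<le> sup b (kc b))"

definition BZ_lattice :: "('a::bounded_lattice \<Rightarrow> 'a) \<Rightarrow> ('a \<Rightarrow> 'a) \<Rightarrow> bool" where
  "BZ_lattice kc bc \<longleftrightarrow>
     pseudo_kleene kc \<and>
     (\<forall>a. inf a (bc a) = bot) \<and>
     (\<forall>a. a \<le> bc (bc a)) \<and>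
     (\<forall>a. kc (bc a) = bc (bc a)) \<and>
     (\<forall>a b. a \<le> b \<longrightarrow> bc b \<le> bc a)"

definition zero_meet_irreducible :: "'a::bounded_lattice itself \<Rightarrow> bool" where
  "zero_meet_irreducible _ \<longleftrightarrow>
     (\<forall>a b::'a. inf a b = bot \<longrightarrow> a = bot \<or> b = bot)"

definition trivial_brouwer :: "('a::bounded_lattice \<Rightarrow> 'a) \<Rightarrow> bool" where
  "trivial_brouwer bc \<longleftrightarrow> bc bot = top \<and> (\<forall>a. a \<noteq> bot \<longrightarrow> bc a = bot)"

definition antiortholattice :: "('a::bounded_lattice \<Rightarrow> 'a) \<Rightarrow> ('a \<Rightarrow> 'a) \<Rightarrow> bool" where
  "antiortholattice kc bc \<longleftrightarrow>
     pseudo_kleene kc \<and>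
     {a. inf a (kc a) = bot} = {bot, top} \<and>
     trivial_brouwer bc"

end

theory Submission
  imports Defs
begin

lemma zmi_aol:
  fixes kc bc :: "'a::bounded_lattice \<Rightarrow> 'a"
  assumes B: "BZ_lattice kc bc" and Z: "zero_meet_irreducible TYPE('a)"
  shows "antiortholattice kc bc"
proof -
  have pk: "pseudo_kleene kc" using B by (simp add: BZ_lattice_def)
  have inv: "\<And>a. kc (kc a) = a" and anti: "\<And>a b. a \<le> b \<Longrightarrow> kc b \<le> kc a"
    using pk by (auto simp: pseudo_kleene_def)
  have z: "\<And>a b::'a. inf a b = bot \<Longrightarrow> a = bot \<or> b = bot"
    using Z by (simp add: zero_meet_irreducible_def)
  have bz1: "\<And>a. inf a (bc a) = bot" and bz2: "\<And>a. a \<le> bc (bc a)"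
    and bz4: "\<And>a b. a \<le> b \<Longrightarrow> bc b \<le> bc a" using B by (auto simp: BZ_lattice_def)
  have kb: "kc bot = top"
  proof -
    have "kc (kc top) \<le> kc bot" by (rule anti) simp
    then show ?thesis using inv by (simp add: top_unique)
  qed
  have kt: "kc top = bot" using kb inv by metis
  have bna: "\<And>a. a \<noteq> bot \<Longrightarrow> bc a = bot" using bz1 z by blast
  have bb: "bc bot = top"
  proof (cases "top = (bot::'a)")
    case True then show ?thesis by (metis bot_unique top_greatest)
  next
    case False
    then have "bc top = bot" using bna by blast
    then show ?thesis using bz2[of top] by (simp add: top_unique)
  qed
  have S: "{a. inf a (kc a) = bot} = {bot, top}"
  proof (intro set_eqI iffI)
    fix a assume "a \<in> {a. inf a (kc a) = bot}"
    then have "a = bot \<or> kc a = bot" using z by blast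
    then show "a \<in> {bot, top}" using inv kb by (metis insert_iff)
  next
    fix a assume "a \<in> {bot, top::'a}"
    then show "a \<in> {a. inf a (kc a) = bot}" using kt by auto
  qed
  show ?thesis unfolding antiortholattice_def trivial_brouwer_def
    using pk S bb bna by blast
qed

theorem lemma3p3:
  fixes kc bc :: "'a::bounded_lattice \<Rightarrow> 'a"
  assumes "BZ_lattice kc bc"
  shows "(zero_meet_irreducible TYPE('a) \<longrightarrow> antiortholattice kc bc)
       \<and> ((\<forall>a b::'a. a \<le> b \<or> b \<le> a) \<longrightarrow> antiortholattice kc bc)"
proof (intro conjI impI)
  assume "zero_meet_irreducible TYPE('a)"
  then show "antiortholattice kc bc" using zmi_aol assms by blast
next
  assume C: "\<forall>a b::'a. a \<le> b \<or> b \<le> a"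
  have "zero_meet_irreducible TYPE('a)" unfolding zero_meet_irreducible_def
  proof (intro allI impI)
    fix a b :: 'a assume "inf a b = bot"
    then show "a = bot \<or> b = bot" using C by (metis inf.absorb1 inf.absorb2)
  qed
  then show "antiortholattice kc bc" using zmi_aol assms by blast
qed

end
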